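(* Let $A$ be a pure hyperbolic isometry and $B$ a pure parabolic isometry of $\mathbb{H}^4$ such that $\mathrm{fix}(A)\cap\mathrm{fix}(B)=\emptyset$. Then $A$ and $B$ are linked.
   Context: A pure hyperbolic isometry is a composition of reflections in two ultra-parallel hyperplanes. A pure parabolic isometry is a composition of reflections in two hyperplanes tangent at a unique point at infinity. $\mathrm{fix}(\cdot)$ denotes the set of fixed points in $\mathbb{H}^4\cup\partial\mathbb{H}^4$. Two isometries $A,B$ are linked if there are involutions $\alpha,\beta,\gamma$ of $\mathbb{H}^4$ with $A=\alpha\beta$ and $B=\beta\gamma$. *)

theory Defs
  imports "HOL-Analysis.Analysis"
begin

text \<open>Hyperboloid model of hyperbolic 4-space inside Minkowski space R^(4,1),
  realised as real^5 with coordinate 0 timelike.\<close>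

definition lf :: "real^5 \<Rightarrow> real^5 \<Rightarrow> real" where
  "lf x y = (\<Sum>i\<in>UNIV - {0}. x$i * y$i) - x$0 * y$0"

definition H4 :: "(real^5) set" where
  "H4 = {x. lf x x = -1 \<and> x$0 > 0}"

text \<open>Future null vectors; a point at infinity is the ray spanned by such a vector.\<close>
definition null_fut :: "real^5 \<Rightarrow> bool" where
  "null_fut v \<longleftrightarrow> lf v v = 0 \<and> v$0 > 0"

definition same_ray :: "real^5 \<Rightarrow> real^5 \<Rightarrow> bool" where
  "same_ray v w \<longleftrightarrow> (\<exists>c>0. w = c *\<^sub>R v)"

text \<open>Isometries of H^4 (all, including orientation reversing) = the group O^+(4,1)
  of linear maps preserving the Lorentz form and the upper sheet.\<close>
definition isom :: "(real^5 \<Rightarrow> real^5) \<Rightarrow> bool" where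
  "isom f \<longleftrightarrow> linear f \<and> (\<forall>x y. lf (f x) (f y) = lf x y) \<and> f ` H4 \<subseteq> H4"

definition involution :: "(real^5 \<Rightarrow> real^5) \<Rightarrow> bool" where
  "involution f \<longleftrightarrow> isom f \<and> f \<circ> f = id \<and> f \<noteq> id"

definition spacelike_unit :: "real^5 \<Rightarrow> bool" where
  "spacelike_unit e \<longleftrightarrow> lf e e = 1"

definition hplane :: "real^5 \<Rightarrow> (real^5) set" where
  "hplane e = {x \<in> H4. lf x e = 0}"

definition hplane_bd :: "real^5 \<Rightarrow> real^5 \<Rightarrow> bool" where
  "hplane_bd e v \<longleftrightarrow> null_fut v \<and> lf v e = 0"

definition refl :: "real^5 \<Rightarrow> real^5 \<Rightarrow> real^5" where
  "refl e x = x - (2 * lf x e) *\<^sub>R e"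

text \<open>Ultra-parallel: closures in H^4 \<union> boundary are disjoint.\<close>
definition ultra_parallel :: "real^5 \<Rightarrow> real^5 \<Rightarrow> bool" where
  "ultra_parallel e1 e2 \<longleftrightarrow> hplane e1 \<inter> hplane e2 = {} \<and>
     \<not> (\<exists>v. hplane_bd e1 v \<and> hplane_bd e2 v)"

definition tangent_at_infinity :: "real^5 \<Rightarrow> real^5 \<Rightarrow> bool" where
  "tangent_at_infinity e1 e2 \<longleftrightarrow> hplane e1 \<inter> hplane e2 = {} \<and>
     (\<exists>v. hplane_bd e1 v \<and> hplane_bd e2 v \<and>
          (\<forall>w. hplane_bd e1 w \<and> hplane_bd e2 w \<longrightarrow> same_ray v w))"

definition pure_hyperbolic :: "(real^5 \<Rightarrow> real^5) \<Rightarrow> bool" where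
  "pure_hyperbolic A \<longleftrightarrow> (\<exists>e1 e2. spacelike_unit e1 \<and> spacelike_unit e2 \<and>
     ultra_parallel e1 e2 \<and> A = refl e1 \<circ> refl e2)"

definition pure_parabolic :: "(real^5 \<Rightarrow> real^5) \<Rightarrow> bool" where
  "pure_parabolic A \<longleftrightarrow> (\<exists>e1 e2. spacelike_unit e1 \<and> spacelike_unit e2 \<and>
     tangent_at_infinity e1 e2 \<and> A = refl e1 \<circ> refl e2)"

text \<open>fix(f) in H^4 \<union> boundary: interior fixed points, and fixed points at infinity
  (future null rays mapped to themselves).\<close>
definition fix_int :: "(real^5 \<Rightarrow> real^5) \<Rightarrow> (real^5) set" where
  "fix_int f = {x \<in> H4. f x = x}"

definition fixes_bd :: "(real^5 \<Rightarrow> real^5) \<Rightarrow> real^5 \<Rightarrow> bool" where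
  "fixes_bd f v \<longleftrightarrow> null_fut v \<and> same_ray v (f v)"

definition fix_disjoint :: "(real^5 \<Rightarrow> real^5) \<Rightarrow> (real^5 \<Rightarrow> real^5) \<Rightarrow> bool" where
  "fix_disjoint A B \<longleftrightarrow> fix_int A \<inter> fix_int B = {} \<and>
     \<not> (\<exists>v. fixes_bd A v \<and> fixes_bd B v)"

definition linked :: "(real^5 \<Rightarrow> real^5) \<Rightarrow> (real^5 \<Rightarrow> real^5) \<Rightarrow> bool" where
  "linked A B \<longleftrightarrow> (\<exists>\<alpha> \<beta> \<gamma>. involution \<alpha> \<and> involution \<beta> \<and> involution \<gamma> \<and>
     A = \<alpha> \<circ> \<beta> \<and> B = \<beta> \<circ> \<gamma>)"

end

theory Submission
  imports Defs
begin


lemma lf_sym: "lf x y = lf y x"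
  unfolding lf_def by (simp add: mult.commute)

lemma lf_add_left[simp]: "lf (x + y) z = lf x z + lf y z"
  unfolding lf_def by (simp add: algebra_simps sum.distrib)
lemma lf_add_right[simp]: "lf z (x + y) = lf z x + lf z y"
  unfolding lf_def by (simp add: algebra_simps sum.distrib)
lemma lf_diff_left[simp]: "lf (x - y) z = lf x z - lf y z"
  unfolding lf_def by (simp add: algebra_simps sum_subtractf)
lemma lf_diff_right[simp]: "lf z (x - y) = lf z x - lf z y"
  unfolding lf_def by (simp add: algebra_simps sum_subtractf)
lemma lf_scale_left[simp]: "lf (c *\<^sub>R x) z = c * lf x z"
  unfolding lf_def by (simp add: algebra_simps sum_distrib_left)
lemma lf_scale_right[simp]: "lf z (c *\<^sub>R x) = c * lf z x"
  unfolding lf_def by (simp add: algebra_simps sum_distrib_left)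
lemma lf_minus_left[simp]: "lf (- x) z = - lf x z"
  unfolding lf_def by (simp add: sum_negf)
lemma lf_minus_right[simp]: "lf z (- x) = - lf z x"
  unfolding lf_def by (simp add: sum_negf)
lemma lf_zero[simp]: "lf 0 z = 0" "lf z 0 = 0"
  unfolding lf_def by simp_all

lemma lf_axis: "lf z (axis i 1) = (if i = 0 then - z$0 else z$i)"
proof (cases "i = 0")
  case True
  then show ?thesis unfolding lf_def by (simp add: axis_def)
next
  case False
  have "(\<Sum>j\<in>UNIV - {0}. z $ j * axis i 1 $ j) = (\<Sum>j\<in>UNIV - {0}. if j = i then z$i else 0)"
    by (rule sum.cong) (auto simp: axis_def)
  also have "\<dots> = z$i" using False by (simp add: sum.delta)
  finally show ?thesis using False unfolding lf_def by (simp add: axis_def)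
qed

lemma lf_nondeg: assumes "\<And>y. lf a y = lf b y" shows "a = b"
proof -
  have "\<And>i. a$i = b$i"
  proof -
    fix i
    have "lf a (axis i 1) = lf b (axis i 1)" by (rule assms)
    then show "a$i = b$i" by (simp add: lf_axis split: if_splits)
  qed
  then show ?thesis by (simp add: vec_eq_iff)
qed

definition sp :: "real^5 \<Rightarrow> real^5" where "sp x = (\<chi> i. if i = 0 then 0 else x$i)"

lemma lf_sp: "lf x y = inner (sp x) (sp y) - x$0 * y$0"
proof -
  have "inner (sp x) (sp y) = (\<Sum>i\<in>UNIV. if i = 0 then 0 else x$i * y$i)"
    unfolding inner_vec_def sp_def by (rule sum.cong) auto
  also have "\<dots> = (\<Sum>i\<in>UNIV - {0}. x$i * y$i)"
    by (subst sum.remove[of UNIV 0]) (auto intro!: sum.cong)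
  finally show ?thesis unfolding lf_def by simp
qed

lemma norm_sp: "(norm (sp x))^2 = lf x x + (x$0)^2"
  unfolding lf_sp power2_norm_eq_inner by (simp add: power2_eq_square)

lemma sp_bound: "\<bar>lf x y + x$0 * y$0\<bar> \<le> norm (sp x) * norm (sp y)"
  using Cauchy_Schwarz_ineq2[of "sp x" "sp y"] by (simp add: lf_sp)

lemma null_norm: assumes "null_fut v" shows "norm (sp v) = v$0"
proof -
  have "(norm (sp v))^2 = (v$0)^2" using assms norm_sp[of v] unfolding null_fut_def by simp
  then show ?thesis using assms unfolding null_fut_def
    by (metis norm_ge_zero order_less_imp_le power2_eq_iff_nonneg)
qed

lemma time_pos: assumes "lf y y < 0" "null_fut v" "lf y v < 0" shows "y$0 > 0"
proof (rule ccontr)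
  assume "\<not> y$0 > 0"
  have n: "norm (sp v) = v$0" "v$0 > 0" using null_norm assms(2) unfolding null_fut_def by auto
  have a: "(norm (sp y))^2 < (y$0)^2" using norm_sp[of y] assms(1) by simp
  have "norm (sp y) < - y$0"
    using a \<open>\<not> y$0 > 0\<close> power2_less_imp_less[of "norm (sp y)" "- y$0"] by simp
  moreover have "\<bar>lf y v + y$0 * v$0\<bar> \<le> norm (sp y) * v$0" using sp_bound[of y v] n by simp
  ultimately show False using assms(3) n
    by (smt (verit, ccfv_SIG) mult_less_cancel_right_disj mult_minus_left)
qed

lemma neg_lf: assumes "x \<in> H4" "null_fut v" shows "lf x v < 0"
proof -
  have n: "norm (sp v) = v$0" "v$0 > 0" using null_norm assms(2) unfolding null_fut_def by auto
  have x: "lf x x = -1" "x$0 > 0" using assms(1) unfolding H4_def by auto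
  have a: "(norm (sp x))^2 < (x$0)^2" using norm_sp[of x] x by simp
  have "norm (sp x) < x$0" using a x power2_less_imp_less[of "norm (sp x)" "x$0"] by simp
  moreover have "\<bar>lf x v + x$0 * v$0\<bar> \<le> norm (sp x) * v$0" using sp_bound[of x v] n by simp
  ultimately show ?thesis using n
    by (smt (verit, ccfv_SIG) mult_less_cancel_right_disj)
qed

lemma same_sheet: assumes "x \<in> H4" "lf y y = -1" "lf x y < 0" shows "y \<in> H4"
proof (rule ccontr)
  assume ny: "y \<notin> H4"
  have x: "lf x x = -1" "x$0 > 0" using assms(1) unfolding H4_def by auto
  have y0: "y$0 \<le> 0" using ny assms(2) unfolding H4_def by auto
  have ax: "norm (sp x) < x$0" using norm_sp[of x] x power2_less_imp_less[of "norm (sp x)" "x$0"] by simp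
  have ay: "norm (sp y) < - y$0" using norm_sp[of y] assms(2) y0 power2_less_imp_less[of "norm (sp y)" "- y$0"] by simp
  have "norm (sp x) * norm (sp y) < x$0 * (- y$0)"
    using mult_strict_mono'[OF ax ay norm_ge_zero norm_ge_zero] by simp
  moreover have "\<bar>lf x y + x$0 * y$0\<bar> \<le> norm (sp x) * norm (sp y)" by (rule sp_bound)
  ultimately show False using assms(3) by (smt (verit) mult_minus_right)
qed

lemma timelike_perp_null: assumes "lf y y < 0" "null_fut v" "lf y v = 0" shows False
proof -
  have n: "norm (sp v) = v$0" "v$0 > 0" using null_norm assms(2) unfolding null_fut_def by auto
  have "(norm (sp y))^2 < (y$0)^2" using norm_sp[of y] assms(1) by simp
  then have a: "norm (sp y) < \<bar>y$0\<bar>" using power2_less_imp_less[of "norm (sp y)" "\<bar>y$0\<bar>"] by simp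
  have "\<bar>y$0 * v$0\<bar> \<le> norm (sp y) * v$0" using sp_bound[of y v] n assms(3) by simp
  then show False using a n by (simp add: abs_mult)
qed

lemma null_perp_null: assumes "lf m m = 0" "null_fut v" "lf m v = 0" shows "\<exists>c. m = c *\<^sub>R v"
proof -
  have v: "lf v v = 0" "v$0 > 0" using assms(2) unfolding null_fut_def by auto
  define c where "c = m$0 / v$0"
  define d where "d = m - c *\<^sub>R v"
  have d0: "d$0 = 0" using v by (simp add: d_def c_def)
  have "lf d d = 0" using assms v by (simp add: d_def lf_sym[of v m])
  then have "norm (sp d) = 0" using norm_sp[of d] d0 by simp
  then have "sp d = 0" by simp
  then have "d = 0" using d0 unfolding sp_def by (simp add: vec_eq_iff) (metis)
  then show ?thesis unfolding d_def by auto
qed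

lemma lf_scale_left'[simp]: "lf (- (c *\<^sub>R x)) z = - c * lf x z" by simp

lemma refl_lin: "linear (refl e)"
  by (rule linearI) (simp_all add: refl_def algebra_simps)

lemma refl_lf: assumes "lf e e = 1" shows "lf (refl e x) (refl e y) = lf x y"
  using assms by (simp add: refl_def algebra_simps lf_sym[of e y])

lemma refl_refl: assumes "lf e e = 1" shows "refl e (refl e x) = x"
  by (rule lf_nondeg) (simp add: assms refl_def algebra_simps)

lemma refl_neg[simp]: "refl (- e) = refl e"
  by (rule ext) (simp add: refl_def)

lemma refl_H4: assumes "lf e e = 1" "x \<in> H4" shows "refl e x \<in> H4"
proof (rule same_sheet[OF assms(2)])
  show "lf (refl e x) (refl e x) = -1" using refl_lf[OF assms(1)] assms(2) unfolding H4_def by simp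
  have "lf x (refl e x) = lf x x - 2 * (lf x e)^2" by (simp add: refl_def power2_eq_square lf_sym[of e x])
  then have h: "lf x (refl e x) = -1 - 2 * (lf x e)^2" using assms(2) unfolding H4_def by simp
  show "lf x (refl e x) < 0" using h zero_le_power2[of "lf x e"] by linarith
qed

lemma isom_refl: assumes "lf e e = 1" shows "isom (refl e)"
  unfolding isom_def using refl_lin refl_lf[OF assms] refl_H4[OF assms] by auto

lemma inv_refl: assumes "lf e e = 1" shows "involution (refl e)"
proof -
  have "refl e e = - e" by (rule lf_nondeg) (simp add: assms refl_def)
  moreover have "e \<noteq> 0" using assms by auto
  ultimately have "refl e \<noteq> id"
  proof (intro notI)
    assume "refl e e = - e" "e \<noteq> 0" "refl e = id"
    then have "- e = e" by simp
    then have "lf (- e) e = lf e e" by (simp only:)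
    then show False using assms by (simp only: lf_minus_left)
  qed
  then show ?thesis unfolding involution_def using isom_refl[OF assms] refl_refl[OF assms] by (auto simp: fun_eq_iff)
qed

lemma isom_comp: "isom f \<Longrightarrow> isom g \<Longrightarrow> isom (f \<circ> g)"
  unfolding isom_def by (auto simp: linear_compose image_subset_iff)

lemma conj_refl: assumes "linear b" "\<And>x y. lf (b x) (b y) = lf x y" "\<And>x. b (b x) = x"
  shows "b (refl e (b x)) = refl (b e) x"
proof -
  have "lf (b x) e = lf x (b e)" using assms(2)[of x "b e"] assms(3) by simp
  then show ?thesis unfolding refl_def using assms(1,3) by (simp add: linear_diff linear_scale)
qed

definition bet :: "real^5 \<Rightarrow> real^5 \<Rightarrow> real^5 \<Rightarrow> real^5" where
  "bet u t x = - x + (2*(lf x t / lf u t - lf t t * lf x u / (lf u t)^2)) *\<^sub>R u + (2 * lf x u / lf u t) *\<^sub>R t"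

lemma bet_lin: "linear (bet u t)"
  by (rule linearI) (simp_all add: bet_def algebra_simps add_divide_distrib diff_divide_distrib)

lemma lf_comb: "lf (-x + a *\<^sub>R u + b *\<^sub>R t) (-y + c *\<^sub>R u + d *\<^sub>R t) =
   lf x y - c*lf x u - d*lf x t - a*lf u y + a*c*lf u u + a*d*lf u t - b*lf t y + b*c*lf t u + b*d*lf t t"
  by (simp add: algebra_simps)

lemma bet_real: fixes k :: real assumes "k \<noteq> 0"
  shows "X - (2*(Yt/k - \<tau>*Yu/k^2))*Xu - (2*Yu/k)*Xt - (2*(Xt/k - \<tau>*Xu/k^2))*Yu
    + (2*(Xt/k - \<tau>*Xu/k^2))*(2*Yu/k)*k - (2*Xu/k)*Yt + (2*Xu/k)*(2*(Yt/k - \<tau>*Yu/k^2))*k + (2*Xu/k)*(2*Yu/k)*\<tau> = X"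
  using assms unfolding power2_eq_square by (simp add: field_simps)

lemma bet_lf: assumes "lf u u = 0" "lf u t \<noteq> 0" shows "lf (bet u t x) (bet u t y) = lf x y"
  unfolding bet_def lf_comb using bet_real[OF assms(2), of "lf x y" "lf y t" "lf t t" "lf y u" "lf x u" "lf x t"] assms
  by (simp add: lf_sym[of t u] lf_sym[of u y] lf_sym[of t y])

lemma bet_lfu: assumes "lf u u = 0" "lf u t \<noteq> 0" shows "lf (bet u t x) u = lf x u"
  using assms by (simp add: bet_def lf_sym[of t u])

lemma bet_lft: assumes "lf u u = 0" "lf u t \<noteq> 0" shows "lf (bet u t x) t = lf x t"
  using assms by (simp add: bet_def lf_sym[of t u] power2_eq_square field_simps)

lemma bet_bet: assumes "lf u u = 0" "lf u t \<noteq> 0" shows "bet u t (bet u t x) = x"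
  apply (subst (1) bet_def)
  unfolding bet_lfu[OF assms] bet_lft[OF assms] unfolding bet_def by simp

lemma bet_u: assumes "lf u u = 0" "lf u t \<noteq> 0" shows "bet u t u = u"
  by (rule lf_nondeg) (use assms in \<open>simp add: bet_def lf_sym[of t u]\<close>)

lemma bet_perp: assumes "lf w u = 0" "lf w t = 0" shows "bet u t w = - w"
  using assms by (simp add: bet_def)

lemma bet_t: assumes "lf u u = 0" "lf u t \<noteq> 0" shows "bet u t t = t"
  by (rule lf_nondeg) (use assms in \<open>simp add: bet_def lf_sym[of t u] field_simps power2_eq_square\<close>)

lemma bet_e: assumes "lf e u = 0" shows "bet u t e = - e + (2 * lf e t / lf u t) *\<^sub>R u"
  using assms by (simp add: bet_def)

lemma bet_H4: assumes "null_fut u" "lf u t \<noteq> 0" "x \<in> H4" shows "bet u t x \<in> H4"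
proof -
  have u: "lf u u = 0" using assms(1) unfolding null_fut_def by simp
  have "lf (bet u t x) u = lf x u" using bet_lf[OF u assms(2), of x u] bet_u[OF u assms(2)] by simp
  then have l: "lf (bet u t x) u < 0" using neg_lf[OF assms(3,1)] by simp
  have m: "lf (bet u t x) (bet u t x) = -1" using bet_lf[OF u assms(2)] assms(3) unfolding H4_def by simp
  have "(bet u t x)$0 > 0" by (rule time_pos[OF _ assms(1) l]) (simp add: m)
  then show ?thesis using m unfolding H4_def by simp
qed



lemma A_core:
  assumes e1: "lf e1 e1 = 1" and e2: "lf e2 e2 = 1" and w: "w * lf s s = 1"
    and s: "s = lf e2 u *\<^sub>R e1 - lf e1 u *\<^sub>R e2"
  shows "refl (e1 - (2 * lf s e1 * w) *\<^sub>R s) (refl (e2 - (2 * lf s e2 * w) *\<^sub>R s) x) = refl e2 (refl e1 x)"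
proof (rule lf_nondeg)
  fix y
  define p1 where "p1 = lf e1 u"
  define p2 where "p2 = lf e2 u"
  define g where "g = lf e1 e2"
  have ls: "\<And>z. lf s z = p2 * lf e1 z - p1 * lf e2 z" "\<And>z. lf z s = p2 * lf z e1 - p1 * lf z e2"
    unfolding s p1_def p2_def by simp_all
  have [simp]: "lf e2 e1 = g" unfolding g_def by (rule lf_sym)
  have [simp]: "lf y e1 = lf e1 y" "lf y e2 = lf e2 y" by (simp_all add: lf_sym)
  have w': "w * (p2 * (p2 - p1 * g) - p1 * (p2 * g - p1)) = 1"
    using w unfolding ls by (simp add: e1 e2 g_def)
  show "lf (refl (e1 - (2 * lf s e1 * w) *\<^sub>R s) (refl (e2 - (2 * lf s e2 * w) *\<^sub>R s) x)) y =
        lf (refl e2 (refl e1 x)) y"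
    unfolding refl_def using w' by (simp add: ls e1 e2 g_def[symmetric]) algebra
qed

lemma B_core:
  assumes e: "lf e e = 1" and u: "lf u u = 0" and eu: "lf e u = 0" and g: "g * g = 1"
    and b: "b = g * a + 2 * c"
  shows "refl (- e + a *\<^sub>R u) (refl (- (g *\<^sub>R e + c *\<^sub>R u) + b *\<^sub>R u) x) = refl (g *\<^sub>R e + c *\<^sub>R u) (refl e x)"
proof (rule lf_nondeg)
  fix y
  have [simp]: "lf u e = 0" using eu by (simp add: lf_sym)
  have [simp]: "lf y e = lf e y" "lf y u = lf u y" by (simp_all add: lf_sym)
  show "lf (refl (- e + a *\<^sub>R u) (refl (- (g *\<^sub>R e + c *\<^sub>R u) + b *\<^sub>R u) x)) y =
    lf (refl (g *\<^sub>R e + c *\<^sub>R u) (refl e x)) y"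
    unfolding refl_def b using g by (simp add: e u eu) algebra
qed

lemma sigma_zero:
  assumes e1: "lf e1 e1 = 1" and e2: "lf e2 e2 = 1" and np: "lf e1 u \<noteq> 0 \<or> lf e2 u \<noteq> 0"
    and sc: "lf e2 u *\<^sub>R e1 - lf e1 u *\<^sub>R e2 = c *\<^sub>R u"
  shows "refl e1 (refl e2 u) = (1 + 2*c^2 + 2*c*lf e1 e2) *\<^sub>R u" "1 + 2*c^2 + 2*c*lf e1 e2 > 0"
proof -
  define p1 where "p1 = lf e1 u"
  define p2 where "p2 = lf e2 u"
  define g where "g = lf e1 e2"
  have [simp]: "lf e2 e1 = g" unfolding g_def by (rule lf_sym)
  have [simp]: "lf u e1 = p1" "lf u e2 = p2" by (simp_all add: p1_def p2_def lf_sym)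
  have rel: "\<And>z. p2 * lf e1 z - p1 * lf e2 z = c * lf u z"
    using sc unfolding p1_def p2_def by (metis lf_diff_left lf_scale_left)
  have r1: "p2 - p1 * g = c * p1" using rel[of e1] e1 by (simp add: lf_sym[of e2 e1] g_def)
  have r2: "p2 * g - p1 = c * p2" using rel[of e2] e2 by (simp add: g_def)
  show "refl e1 (refl e2 u) = (1 + 2*c^2 + 2*c*lf e1 e2) *\<^sub>R u"
  proof (rule lf_nondeg)
    fix y
    have ry: "p2 * lf e1 y - p1 * lf e2 y = c * lf u y" by (rule rel)
    show "lf (refl e1 (refl e2 u)) y = lf ((1 + 2*c^2 + 2*c*lf e1 e2) *\<^sub>R u) y"
      unfolding refl_def g_def[symmetric] using r1 r2 ry by (simp add: power2_eq_square) algebra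
  qed
  have a1: "p1 * (g*g - 1 - c*c) = 0" using r1 r2 by algebra
  have a2: "p2 * (g*g - 1 - c*c) = 0" using r1 r2 by algebra
  have cc: "c*c = g*g - 1" using a1 a2 np unfolding p1_def p2_def by auto
  have lam: "1 + 2*c^2 + 2*c*g = (g + c)^2" using cc by (simp add: power2_eq_square algebra_simps)
  have "g + c \<noteq> 0"
  proof
    assume "g + c = 0"
    moreover have "p2 = p1 * (g + c)" using r1 by (simp add: algebra_simps)
    ultimately have "p2 = 0" by simp
    then have "p1 = 0" using r2 by simp
    then show False using \<open>p2 = 0\<close> np unfolding p1_def p2_def by simp
  qed
  then show "1 + 2*c^2 + 2*c*lf e1 e2 > 0" using lam unfolding g_def by simp
qed

lemma B_struct:
  assumes e3: "lf e3 e3 = 1" and e4: "lf e4 e4 = 1" and u: "null_fut u" and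
    e3u: "lf e3 u = 0" and e4u: "lf e4 u = 0" and disj: "hplane e3 \<inter> hplane e4 = {}"
  shows "\<exists>g c. g * g = 1 \<and> e4 = g *\<^sub>R e3 + c *\<^sub>R u"
proof -
  define g where "g = lf e3 e4"
  have [simp]: "lf e4 e3 = g" unfolding g_def by (rule lf_sym)
  have "\<not> g*g > 1"
  proof
    assume gg: "g*g > 1"
    define y where "y = e3 - g *\<^sub>R e4"
    have "lf y y = 1 - g*g" unfolding y_def by (simp add: e3 e4 g_def[symmetric])
    then have "lf y y < 0" using gg by simp
    moreover have "lf y u = 0" unfolding y_def using e3u e4u by simp
    ultimately show False using timelike_perp_null u by blast
  qed
  moreover have "\<not> g*g < 1"
  proof
    assume gg: "g*g < 1"
    define z :: "real^5" where "z = axis 0 1"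
    define a where "a = (lf z e3 - g * lf z e4) / (1 - g*g)"
    define b where "b = (lf z e4 - g * lf z e3) / (1 - g*g)"
    define z' where "z' = z - a *\<^sub>R e3 - b *\<^sub>R e4"
    have nz: "1 - g*g \<noteq> 0" using gg by simp
    have ha: "a * (1 - g*g) = lf z e3 - g * lf z e4" unfolding a_def using nz by simp
    have hb: "b * (1 - g*g) = lf z e4 - g * lf z e3" unfolding b_def using nz by simp
    have "(a + b*g - lf z e3) * (1 - g*g) = 0" using ha hb by algebra
    then have s3: "a + b*g = lf z e3" using nz by simp
    have "(a*g + b - lf z e4) * (1 - g*g) = 0" using ha hb by algebra
    then have s4: "a*g + b = lf z e4" using nz by simp
    have z3: "lf z' e3 = 0" unfolding z'_def using s3 by (simp add: e3 algebra_simps)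
    have z4: "lf z' e4 = 0" unfolding z'_def using s4 by (simp add: e4 g_def[symmetric] algebra_simps)
    have zu: "lf z' u < 0"
    proof -
      have "lf z u = - u$0" unfolding z_def by (subst lf_sym) (simp add: lf_axis)
      then show ?thesis unfolding z'_def using e3u e4u u unfolding null_fut_def by simp
    qed
    define x where "x = z' + ((-1 - lf z' z') / (2 * lf z' u)) *\<^sub>R u"
    have uu: "lf u u = 0" using u unfolding null_fut_def by simp
    have xx: "lf x x = -1" unfolding x_def using zu uu by (simp add: lf_sym[of u z'] field_simps)
    have xu: "lf x u < 0" unfolding x_def using zu uu by simp
    have x0: "x$0 > 0" by (rule time_pos[OF _ u xu]) (simp add: xx)
    have "lf x e3 = 0" "lf x e4 = 0" unfolding x_def using z3 z4 e3u e4u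
      by (simp_all add: lf_sym[of u e3] lf_sym[of u e4])
    then have "x \<in> hplane e3" "x \<in> hplane e4"
      unfolding hplane_def H4_def using xx x0 by simp_all
    then show False using disj by blast
  qed
  ultimately have gg: "g * g = 1" by simp
  define m where "m = e4 - g *\<^sub>R e3"
  have "lf m m = 0" unfolding m_def using gg by (simp add: e3 e4 g_def[symmetric] algebra_simps)
  moreover have "lf m u = 0" unfolding m_def using e3u e4u by simp
  ultimately obtain c where "m = c *\<^sub>R u" using null_perp_null u by blast
  then have "e4 = g *\<^sub>R e3 + c *\<^sub>R u" unfolding m_def by (metis diff_add_cancel add.commute)
  then show ?thesis using gg by blast
qed



lemma A_core':
  assumes e1: "lf e1 e1 = 1" and e2: "lf e2 e2 = 1" and w: "w * lf s s = 1"
    and s: "s = lf e2 u *\<^sub>R e1 - lf e1 u *\<^sub>R e2"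
  shows "refl (e1 - (2 * lf s e1 * w) *\<^sub>R s) (refl (e2 - (2 * lf s e2 * w) *\<^sub>R s) x) = refl e2 (refl e1 x)"
  using A_core[OF assms] .

lemma span_real: fixes w p1 p2 q1 q2 Ya Yb :: real
  assumes "w * (p2 * q1 - p1 * q2) = 1"
  shows "Ya = q1*w*(p2*Ya - p1*Yb) - p1*w*(q2*Ya - q1*Yb)" "Yb = q2*w*(p2*Ya - p1*Yb) - p2*w*(q2*Ya - q1*Yb)"
  using assms by algebra+

lemma refl_fix: "lf u e = 0 \<Longrightarrow> refl e u = u"
  by (simp add: refl_def)

theorem theorem7p3:
  fixes A B :: "real^5 \<Rightarrow> real^5"
  assumes "pure_hyperbolic A" and "pure_parabolic B" and "fix_disjoint A B"
  shows "linked A B"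
proof -
  obtain e1 e2 where e1: "lf e1 e1 = 1" and e2: "lf e2 e2 = 1" and A: "A = refl e1 \<circ> refl e2"
    using assms(1) unfolding pure_hyperbolic_def spacelike_unit_def by blast
  obtain e3 e4 where e3: "lf e3 e3 = 1" and e4: "lf e4 e4 = 1" and tg: "tangent_at_infinity e3 e4"
    and B: "B = refl e3 \<circ> refl e4"
    using assms(2) unfolding pure_parabolic_def spacelike_unit_def by blast
  obtain u where disj: "hplane e3 \<inter> hplane e4 = {}" and hb: "hplane_bd e3 u" "hplane_bd e4 u"
    using tg unfolding tangent_at_infinity_def by blast
  have u: "null_fut u" and e3u: "lf e3 u = 0" and e4u: "lf e4 u = 0"
    using hb unfolding hplane_bd_def by (auto simp: lf_sym)
  have uu: "lf u u = 0" using u unfolding null_fut_def by simp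
  obtain g c where gg: "g * g = 1" and e4eq: "e4 = g *\<^sub>R e3 + c *\<^sub>R u"
    using B_struct[OF e3 e4 u e3u e4u disj] by blast
  have Bu: "B u = u" unfolding B using e3u e4u by (simp add: refl_fix lf_sym)
  have fbB: "fixes_bd B u" unfolding fixes_bd_def same_ray_def using u Bu
    by (auto intro!: exI[of _ 1])
  have nA: "\<not> (\<exists>l>0. A u = l *\<^sub>R u)"
  proof
    assume "\<exists>l>0. A u = l *\<^sub>R u"
    then have "fixes_bd A u" unfolding fixes_bd_def same_ray_def using u by auto
    then show False using fbB assms(3) unfolding fix_disjoint_def by blast
  qed
  define p1 where "p1 = lf e1 u"
  define p2 where "p2 = lf e2 u"
  have np: "p1 \<noteq> 0 \<or> p2 \<noteq> 0"
  proof (rule ccontr)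
    assume "\<not> (p1 \<noteq> 0 \<or> p2 \<noteq> 0)"
    then have "A u = 1 *\<^sub>R u" unfolding A p1_def p2_def by (simp add: refl_fix lf_sym)
    then have "\<exists>l>0. A u = l *\<^sub>R u" by (intro exI[of _ 1]) simp
    then show False using nA by blast
  qed
  define s where "s = p2 *\<^sub>R e1 - p1 *\<^sub>R e2"
  have su: "lf s u = 0" unfolding s_def p1_def p2_def by simp
  have sig: "lf s s \<noteq> 0"
  proof
    assume "lf s s = 0"
    then obtain c' where "s = c' *\<^sub>R u" using null_perp_null[OF _ u su] by blast
    then have "lf e2 u *\<^sub>R e1 - lf e1 u *\<^sub>R e2 = c' *\<^sub>R u" unfolding s_def p1_def p2_def .
    from sigma_zero[OF e1 e2 _ this] np have "\<exists>l>0. A u = l *\<^sub>R u"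
      unfolding A p1_def p2_def by auto
    then show False using nA by blast
  qed
  define w where "w = 1 / lf s s"
  have w: "w * lf s s = 1" unfolding w_def using sig by simp
  define t where "t = lf s e2 *\<^sub>R e1 - lf s e1 *\<^sub>R e2"
  have ss: "lf s s = p2 * lf s e1 - p1 * lf s e2" unfolding s_def by (simp add: lf_sym algebra_simps)
  have k: "lf u t = - lf s s" unfolding t_def ss p1_def p2_def by (simp add: lf_sym)
  have kn: "lf u t \<noteq> 0" using k sig by simp
  have st: "lf s t = 0" unfolding t_def by (simp add: algebra_simps)
  define \<beta> where "\<beta> = bet u t"
  have blin: "linear \<beta>" unfolding \<beta>_def by (rule bet_lin)
  have blf: "\<And>x y. lf (\<beta> x) (\<beta> y) = lf x y" unfolding \<beta>_def using bet_lf[OF uu kn] .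
  have bb: "\<And>x. \<beta> (\<beta> x) = x" unfolding \<beta>_def using bet_bet[OF uu kn] .
  have bH: "\<beta> ` H4 \<subseteq> H4" unfolding \<beta>_def using bet_H4[OF u kn] by auto
  have bu: "\<beta> u = u" unfolding \<beta>_def using bet_u[OF uu kn] .
  have bs: "\<beta> s = - s" unfolding \<beta>_def using bet_perp[OF su st] .
  have bt: "\<beta> t = t" unfolding \<beta>_def using bet_t[OF uu kn] .
  have conj: "\<And>e x. \<beta> (refl e (\<beta> x)) = refl (\<beta> e) x" using conj_refl[OF blin blf bb] .
  have isb: "isom \<beta>" unfolding isom_def using blin blf bH by auto
  have span: "e = (lf s e * w) *\<^sub>R s - (lf e u * w) *\<^sub>R t" if "e = e1 \<or> e = e2" for e
  proof (rule lf_nondeg)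
    fix y
    have l1: "lf s y = p2 * lf e1 y - p1 * lf e2 y" unfolding s_def by simp
    have l2: "lf t y = lf s e2 * lf e1 y - lf s e1 * lf e2 y" unfolding t_def by simp
    show "lf e y = lf ((lf s e * w) *\<^sub>R s - (lf e u * w) *\<^sub>R t) y"
      using that span_real[OF w[unfolded ss p1_def p2_def], where Ya="lf e1 y" and Yb="lf e2 y"]
      by (auto simp: l1 l2 p1_def p2_def)
  qed
  have be: "\<beta> e = e - (2 * lf s e * w) *\<^sub>R s" if "e = e1 \<or> e = e2" for e
  proof -
    have "\<beta> e = \<beta> ((lf s e * w) *\<^sub>R s - (lf e u * w) *\<^sub>R t)" using span[OF that] by (rule arg_cong)
    also have "\<dots> = - (lf s e * w) *\<^sub>R s - (lf e u * w) *\<^sub>R t"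
      using blin bs bt by (simp add: linear_diff linear_scale)
    finally have h: "\<beta> e = - (lf s e * w) *\<^sub>R s - (lf e u * w) *\<^sub>R t" .
    show ?thesis
    proof (rule lf_nondeg)
      fix y
      have "lf e y = lf ((lf s e * w) *\<^sub>R s - (lf e u * w) *\<^sub>R t) y" using span[OF that] by (rule arg_cong)
      then show "lf (\<beta> e) y = lf (e - (2 * lf s e * w) *\<^sub>R s) y" unfolding h by (simp add: algebra_simps)
    qed
  qed
  have bAb: "\<beta> (A (\<beta> x)) = refl e2 (refl e1 x)" for x
  proof -
    have "\<beta> (A (\<beta> x)) = \<beta> (refl e1 (\<beta> (\<beta> (refl e2 (\<beta> x)))))" unfolding A using bb by simp
    also have "\<dots> = refl (\<beta> e1) (refl (\<beta> e2) x)" using conj by simp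
    also have "\<dots> = refl e2 (refl e1 x)" unfolding be[of e1, simplified] be[of e2, simplified]
      by (rule A_core'[OF e1 e2 w]) (simp add: s_def p1_def p2_def)
    finally show ?thesis .
  qed
  have bBb: "\<beta> (B (\<beta> x)) = refl e4 (refl e3 x)" for x
  proof -
    have "\<beta> (B (\<beta> x)) = \<beta> (refl e3 (\<beta> (\<beta> (refl e4 (\<beta> x)))))" unfolding B using bb by simp
    also have "\<dots> = refl (\<beta> e3) (refl (\<beta> e4) x)" using conj by simp
    also have "\<beta> e3 = - e3 + (2 * lf e3 t / lf u t) *\<^sub>R u" unfolding \<beta>_def using bet_e[OF e3u] .
    also have "\<beta> e4 = - (g *\<^sub>R e3 + c *\<^sub>R u) + (2 * lf e4 t / lf u t) *\<^sub>R u"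
      unfolding \<beta>_def using bet_e[OF e4u] e4eq by simp
    also have "refl (- e3 + (2 * lf e3 t / lf u t) *\<^sub>R u)
       (refl (- (g *\<^sub>R e3 + c *\<^sub>R u) + (2 * lf e4 t / lf u t) *\<^sub>R u) x) = refl e4 (refl e3 x)"
    proof -
      have "2 * lf e4 t / lf u t = g * (2 * lf e3 t / lf u t) + 2 * c"
        unfolding e4eq using kn by (simp add: field_simps lf_sym[of t u])
      from B_core[OF e3 uu e3u gg this, of x] show ?thesis using e4eq by simp
    qed
    finally show ?thesis .
  qed
  have isA: "isom A" unfolding A by (rule isom_comp[OF isom_refl[OF e1] isom_refl[OF e2]])
  have isB: "isom B" unfolding B by (rule isom_comp[OF isom_refl[OF e3] isom_refl[OF e4]])
  have bnid: "\<beta> \<noteq> id"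
  proof
    assume "\<beta> = id"
    then have "- s = s" using bs by simp
    then have "lf (- s) s = lf s s" by (simp only:)
    then show False using sig by (simp only: lf_minus_left)
  qed
  have invb: "involution \<beta>" unfolding involution_def using isb bb bnid by (auto simp: fun_eq_iff)
  have inva: "involution (A \<circ> \<beta>)"
  proof -
    have "(A \<circ> \<beta>) \<circ> (A \<circ> \<beta>) = id"
    proof
      fix x
      have "A (\<beta> (A (\<beta> x))) = x" unfolding bAb unfolding A using refl_refl[OF e1] refl_refl[OF e2] by simp
      then show "((A \<circ> \<beta>) \<circ> (A \<circ> \<beta>)) x = id x" by simp
    qed
    moreover have "A \<circ> \<beta> \<noteq> id"
    proof
      assume "A \<circ> \<beta> = id"
      then have "A (\<beta> u) = u" by (metis comp_apply id_apply)
      then have "A u = 1 *\<^sub>R u" using bu by simp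
      then have "\<exists>l>0. A u = l *\<^sub>R u" by (intro exI[of _ 1]) simp
      then show False using nA by blast
    qed
    ultimately show ?thesis unfolding involution_def using isom_comp[OF isA isb] by simp
  qed
  have invc: "involution (\<beta> \<circ> B)"
  proof -
    have "(\<beta> \<circ> B) \<circ> (\<beta> \<circ> B) = id"
    proof
      fix x
      have "\<beta> (B (\<beta> (B x))) = x" unfolding bBb unfolding B using refl_refl[OF e3] refl_refl[OF e4] by simp
      then show "((\<beta> \<circ> B) \<circ> (\<beta> \<circ> B)) x = id x" by simp
    qed
    moreover have "\<beta> \<circ> B \<noteq> id"
    proof
      assume "\<beta> \<circ> B = id"
      then have "\<beta> (B e3) = e3" by (metis comp_apply id_apply)
      then have "B e3 = \<beta> e3" using bb by metis
      then have "lf (B e3) e3 = lf (\<beta> e3) e3" by simp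
      moreover have "\<beta> e3 = - e3 + (2 * lf e3 t / lf u t) *\<^sub>R u" unfolding \<beta>_def using bet_e[OF e3u] .
      moreover have "lf (B e3) e3 = 1"
        unfolding B e4eq using e3 e3u gg by (simp add: refl_def lf_sym[of u e3] algebra_simps)
      ultimately show False using e3 e3u by (simp add: lf_sym[of u e3])
    qed
    ultimately show ?thesis unfolding involution_def using isom_comp[OF isb isB] by simp
  qed
  have "A = (A \<circ> \<beta>) \<circ> \<beta>" using bb by (auto simp: fun_eq_iff)
  moreover have "B = \<beta> \<circ> (\<beta> \<circ> B)" using bb by (auto simp: fun_eq_iff)
  ultimately show ?thesis unfolding linked_def using inva invb invc by blast
qed

end
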